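(* Let $H$ be a finite simple graph on vertex set $\{x_1,\dots,x_n\}$, let $\Bbbk$ be a field and $S=\Bbbk[x_1,\dots,x_n]$. Suppose $H$ has a perfect matching $M$ of cardinality $k+1$ which is $k$-admissable. Let $u_M=\prod_{e\in M}\prod_{x_i\in e}x_i$. Then the simplicial complex $K^{u_M}(I(H)^{[k]})$ is disconnected.
   Context: A perfect matching covers every vertex. $I(H)^{[k]}$ is the ideal of $S$ generated by the products $e_1\cdots e_k$ over all matchings $\{e_1,\dots,e_k\}$ of $H$ of size $k$ (edge $\{x_i,x_j\}$ identified with $x_ix_j$). For a monomial ideal $I$ and a monomial $x^\alpha$, the upper-Koszul simplicial complex $K^\alpha(I)$ on $\{x_1,\dots,x_n\}$ has as faces the subsets $W$ with $x^\alpha/\prod_{u\in W}u\in I$. A simplicial complex is connected if any two vertices are joined by a sequence of facets with consecutive facets intersecting. Two edges form a gap if they are disjoint and no edge of $H$ joins a vertex of one to a vertex of the other. A sequence $(a_1,\dots,a_n)$ of integers is $k$-admissable if $a_i\ge1$ and $\sum a_i\le n+k-1$. A matching $M$ is $k$-admissable if there are nonempty pairwise disjoint $M_1,\dots,M_r\subseteq M$ with union $M$ such that edges from different $M_i$'s always form a gap in $H$, $(|M_1|,\dots,|M_r|)$ is $k$-admissable, and the induced subgraph of $H$ on $\bigcup_{e\in M_i}e$ is a forest for each $i$. *)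

theory Defs
  imports Main "HOL-Library.Poly_Mapping"
begin

text \<open>Polynomial ring S = k[x_v : v a vertex], as finitely supported functions
  from monomials (exponent vectors 'v =>0 nat) to coefficients.\<close>

type_synonym ('v, 'k) mpoly = "('v \<Rightarrow>\<^sub>0 nat) \<Rightarrow>\<^sub>0 'k"

definition var :: "'v \<Rightarrow> ('v, 'k::comm_ring_1) mpoly" where
  "var x = Poly_Mapping.single (Poly_Mapping.single x 1) 1"

definition ideal_gen :: "'a::comm_ring_1 set \<Rightarrow> 'a set" where
  "ideal_gen G = {p. \<exists>F c. finite F \<and> F \<subseteq> G \<and> p = (\<Sum>g\<in>F. c g * g)}"

definition edge_mon :: "'v set \<Rightarrow> ('v, 'k::comm_ring_1) mpoly" where
  "edge_mon e = (\<Prod>x\<in>e. var x)"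

definition edges_mon :: "'v set set \<Rightarrow> ('v, 'k::comm_ring_1) mpoly" where
  "edges_mon N = (\<Prod>e\<in>N. edge_mon e)"

definition simple_graph :: "'v set set \<Rightarrow> bool" where
  "simple_graph E \<longleftrightarrow> (\<forall>e\<in>E. card e = 2)"

definition matching :: "'v set set \<Rightarrow> 'v set set \<Rightarrow> bool" where
  "matching E N \<longleftrightarrow> N \<subseteq> E \<and> (\<forall>e\<in>N. \<forall>f\<in>N. e \<noteq> f \<longrightarrow> e \<inter> f = {})"

definition perfect_matching :: "'v set set \<Rightarrow> 'v set set \<Rightarrow> bool" where
  "perfect_matching E N \<longleftrightarrow> matching E N \<and> \<Union>N = UNIV"

definition matching_power :: "'v set set \<Rightarrow> nat \<Rightarrow> ('v, 'k::comm_ring_1) mpoly set" where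
  "matching_power E k = ideal_gen {edges_mon N | N. matching E N \<and> card N = k}"

text \<open>Upper-Koszul simplicial complex K^m(I) for a monomial m: faces W with
  m / prod_{u in W} u in I (i.e. m = q * prod_{u in W} u for some q in I).\<close>
definition upper_koszul :: "('v, 'k::comm_ring_1) mpoly set \<Rightarrow> ('v, 'k) mpoly \<Rightarrow> 'v set set" where
  "upper_koszul I m = {W. \<exists>q\<in>I. m = q * (\<Prod>u\<in>W. var u)}"

definition facets :: "'v set set \<Rightarrow> 'v set set" where
  "facets K = {F\<in>K. \<forall>G\<in>K. F \<subseteq> G \<longrightarrow> G = F}"

definition cvertices :: "'v set set \<Rightarrow> 'v set" where
  "cvertices K = {v. {v} \<in> K}"

definition connected_complex :: "'v set set \<Rightarrow> bool" where
  "connected_complex K \<longleftrightarrow>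
    (\<forall>v\<in>cvertices K. \<forall>w\<in>cvertices K. \<exists>Fs. Fs \<noteq> [] \<and> set Fs \<subseteq> facets K \<and>
        v \<in> hd Fs \<and> w \<in> last Fs \<and>
        (\<forall>i. Suc i < length Fs \<longrightarrow> Fs ! i \<inter> Fs ! Suc i \<noteq> {}))"

definition gap :: "'v set set \<Rightarrow> 'v set \<Rightarrow> 'v set \<Rightarrow> bool" where
  "gap E e f \<longleftrightarrow> e \<inter> f = {} \<and> (\<forall>a\<in>e. \<forall>b\<in>f. {a, b} \<notin> E)"

definition induced :: "'v set set \<Rightarrow> 'v set \<Rightarrow> 'v set set" where
  "induced E U = {e\<in>E. e \<subseteq> U}"

definition has_cycle :: "'v set set \<Rightarrow> bool" where
  "has_cycle E \<longleftrightarrow> (\<exists>vs. length vs \<ge> 3 \<and> distinct vs \<and>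
      (\<forall>i<length vs. {vs ! i, vs ! ((i + 1) mod length vs)} \<in> E))"

definition forest :: "'v set set \<Rightarrow> bool" where
  "forest E \<longleftrightarrow> \<not> has_cycle E"

definition admissible_seq :: "nat \<Rightarrow> int list \<Rightarrow> bool" where
  "admissible_seq k as \<longleftrightarrow> (\<forall>a\<in>set as. a \<ge> 1) \<and> sum_list as \<le> int (length as) + int k - 1"

definition admissible_matching :: "'v set set \<Rightarrow> nat \<Rightarrow> 'v set set \<Rightarrow> bool" where
  "admissible_matching E k M \<longleftrightarrow> (\<exists>Ms :: 'v set set list.
      (\<forall>i<length Ms. Ms ! i \<noteq> {}) \<and>
      (\<forall>i<length Ms. \<forall>j<length Ms. i \<noteq> j \<longrightarrow> Ms ! i \<inter> Ms ! j = {}) \<and>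
      \<Union>(set Ms) = M \<and>
      (\<forall>i<length Ms. \<forall>j<length Ms. i \<noteq> j \<longrightarrow>
          (\<forall>e\<in>Ms ! i. \<forall>f\<in>Ms ! j. gap E e f)) \<and>
      admissible_seq k (map (\<lambda>B. int (card B)) Ms) \<and>
      (\<forall>i<length Ms. forest (induced E (\<Union>(Ms ! i)))))"

end

theory Submission
  imports Defs
begin

definition ind :: "'v set \<Rightarrow> ('v \<Rightarrow>\<^sub>0 nat)" where
  "ind S = (\<Sum>x\<in>S. Poly_Mapping.single x 1)"

lemma lookup_ind: "finite S \<Longrightarrow> Poly_Mapping.lookup (ind S) x = (if x \<in> S then 1 else 0)"
proof (induction S rule: finite_induct)
  case empty
  then show ?case by (simp add: ind_def lookup_zero)
next
  case (insert y F)
  then show ?case by (auto simp add: ind_def lookup_add lookup_single when_def)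
qed

lemma prod_var: "finite S \<Longrightarrow> (\<Prod>x\<in>S. var x) = (Poly_Mapping.single (ind S) 1 :: ('v,'k::comm_ring_1) mpoly)"
proof (induction S rule: finite_induct)
  case empty
  then show ?case by (simp add: ind_def lookup_zero)
next
  case (insert x F)
  then show ?case by (simp add: ind_def var_def mult_single)
qed

lemma card_Union_2:
  assumes "\<forall>e\<in>P. card e = 2" "\<forall>e\<in>P. \<forall>f\<in>P. e \<noteq> f \<longrightarrow> e \<inter> f = {}" "finite P"
  shows "card (\<Union>P) = 2 * card P"
proof -
  have "card (\<Union>P) = sum card P"
    by (rule card_Union_disjoint) (use assms in \<open>auto simp: pairwise_def disjnt_def intro: card_ge_0_finite\<close>)
  also have "\<dots> = sum (\<lambda>_. 2) P" using assms(1) by simp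
  finally show ?thesis by simp
qed

lemma edges_mon_Union:
  fixes N :: "'v::finite set set"
  assumes "\<forall>e\<in>N. \<forall>f\<in>N. e \<noteq> f \<longrightarrow> e \<inter> f = {}"
  shows "(edges_mon N :: ('v,'k::comm_ring_1) mpoly) = (\<Prod>x\<in>\<Union>N. var x)"
  unfolding edges_mon_def edge_mon_def
  by (subst prod.Union_disjoint) (use assms in auto)

lemma face_matching:
  fixes W :: "'v::finite set" and M :: "'v set set"
  assumes eq: "edges_mon M = q * (\<Prod>u\<in>W. var u :: ('v,'k::field) mpoly)"
    and q: "q \<in> matching_power E k" and pm: "perfect_matching E M"
  shows "\<exists>N. matching E N \<and> card N = k \<and> \<Union>N \<inter> W = {}"
proof -
  from q obtain F c where F: "finite F" "F \<subseteq> {edges_mon N | N. matching E N \<and> card N = k}"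
    and qd: "q = (\<Sum>g\<in>F. c g * g)"
    unfolding matching_power_def ideal_gen_def by blast
  have "edges_mon M = (\<Prod>x\<in>\<Union>M. var x :: ('v,'k) mpoly)"
    using pm by (intro edges_mon_Union) (auto simp: perfect_matching_def matching_def)
  also have "\<Union>M = UNIV" using pm by (simp add: perfect_matching_def)
  finally have "(Poly_Mapping.single (ind (UNIV::'v set)) 1 :: ('v,'k) mpoly) = (\<Sum>g\<in>F. c g * g * (\<Prod>u\<in>W. var u))"
    using eq qd by (simp add: prod_var sum_distrib_right)
  hence "Poly_Mapping.lookup (\<Sum>g\<in>F. c g * g * (\<Prod>u\<in>W. var u)) (ind (UNIV::'v set)) = Poly_Mapping.lookup (Poly_Mapping.single (ind (UNIV::'v set)) 1 :: ('v,'k) mpoly) (ind (UNIV::'v set))"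
    by (rule arg_cong[symmetric])
  also have "\<dots> = (1::'k)" by simp
  finally have "Poly_Mapping.lookup (\<Sum>g\<in>F. c g * g * (\<Prod>u\<in>W. var u)) (ind (UNIV::'v set)) = (1::'k)" .
  hence "(\<Sum>g\<in>F. Poly_Mapping.lookup (c g * g * (\<Prod>u\<in>W. var u)) (ind (UNIV::'v set))) \<noteq> 0"
    by (simp add: lookup_sum)
  then obtain g where gF: "g \<in> F" and nz: "Poly_Mapping.lookup (c g * g * (\<Prod>u\<in>W. var u)) (ind (UNIV::'v set)) \<noteq> 0"
    by (meson sum.not_neutral_contains_not_neutral)
  from gF F obtain N where N: "matching E N" "card N = k" and gN: "g = edges_mon N" by blast
  have "g = (\<Prod>x\<in>\<Union>N. var x)" unfolding gN
    using N by (intro edges_mon_Union) (auto simp: matching_def)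
  hence "g * (\<Prod>u\<in>W. var u) = Poly_Mapping.single (ind (\<Union>N) + ind W) 1"
    by (simp add: prod_var mult_single)
  hence "ind (UNIV::'v set) \<in> Poly_Mapping.keys (c g * Poly_Mapping.single (ind (\<Union>N) + ind W) 1)"
    using nz by (simp add: in_keys_iff mult.assoc)
  hence "ind (UNIV::'v set) \<in> {a + b | a b. a \<in> Poly_Mapping.keys (c g) \<and> b \<in> Poly_Mapping.keys (Poly_Mapping.single (ind (\<Union>N) + ind W) (1::'k))}"
    using keys_mult[of "c g" "Poly_Mapping.single (ind (\<Union>N) + ind W) (1::'k)"] by blast
  then obtain a where a: "ind (UNIV::'v set) = a + (ind (\<Union>N) + ind W)"
    by auto
  have "\<Union>N \<inter> W = {}"
  proof (rule ccontr)
    assume "\<Union>N \<inter> W \<noteq> {}"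
    then obtain x where "x \<in> \<Union>N" "x \<in> W" by blast
    hence "Poly_Mapping.lookup (ind (UNIV::'v set)) x = Poly_Mapping.lookup a x + 2"
      using a by (simp add: lookup_add lookup_ind)
    thus False by (simp add: lookup_ind)
  qed
  thus ?thesis using N by blast
qed

lemma vertex_face:
  fixes M :: "'v::finite set set"
  assumes pm: "perfect_matching E M" and cM: "card M = k + 1"
  shows "{v} \<in> upper_koszul (matching_power E k :: ('v, 'k::field) mpoly set) (edges_mon M)"
proof -
  from pm obtain e where e: "e \<in> M" "v \<in> e" unfolding perfect_matching_def by blast
  define g :: "('v,'k) mpoly" where "g = edges_mon (M - {e})"
  define c :: "('v,'k) mpoly" where "c = (\<Prod>x\<in>e-{v}. var x)"
  have mt: "matching E (M - {e})" using pm unfolding perfect_matching_def matching_def by blast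
  have cd: "card (M - {e}) = k" using cM e by simp
  have "c * g \<in> matching_power E k"
    unfolding matching_power_def ideal_gen_def
    apply (rule CollectI)
    apply (rule exI[of _ "{g}"])
    apply (rule exI[of _ "\<lambda>_. c"])
    using mt cd by (auto simp: g_def)
  moreover have "edges_mon M = (c * g) * (\<Prod>u\<in>{v}. var u)"
  proof -
    have "edges_mon M = edge_mon e * g" unfolding edges_mon_def g_def
      using e by (simp add: prod.remove)
    also have "edge_mon e = var v * c" unfolding edge_mon_def c_def
      using e by (simp add: prod.remove)
    finally show ?thesis by (simp add: ac_simps)
  qed
  ultimately show ?thesis unfolding upper_koszul_def by blast
qed

theorem lemma5p9:
  fixes E :: "'v::finite set set" and M :: "'v set set" and k :: nat
  assumes "simple_graph E"
    and "perfect_matching E M"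
    and "card M = k + 1"
    and "admissible_matching E k M"
  shows "\<not> connected_complex
           (upper_koszul (matching_power E k :: ('v, 'k::field) mpoly set) (edges_mon M))"
proof
  define K where "K = upper_koszul (matching_power E k :: ('v, 'k::field) mpoly set) (edges_mon M)"
  assume conn: "connected_complex (upper_koszul (matching_power E k :: ('v, 'k::field) mpoly set) (edges_mon M))"
  hence conn: "connected_complex K" unfolding K_def .
  have sg: "\<forall>e\<in>E. card e = 2" using assms(1) unfolding simple_graph_def .
  have ME: "M \<subseteq> E" and Mdisj: "\<forall>e\<in>M. \<forall>f\<in>M. e \<noteq> f \<longrightarrow> e \<inter> f = {}" and MU: "\<Union>M = UNIV"
    using assms(2) unfolding perfect_matching_def matching_def by auto
  from assms(4) obtain Ms :: "'v set set list" where
    ne: "\<forall>i<length Ms. Ms ! i \<noteq> {}" and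
    dj: "\<forall>i<length Ms. \<forall>j<length Ms. i \<noteq> j \<longrightarrow> Ms ! i \<inter> Ms ! j = {}" and
    un: "\<Union>(set Ms) = M" and
    gp: "\<forall>i<length Ms. \<forall>j<length Ms. i \<noteq> j \<longrightarrow> (\<forall>e\<in>Ms ! i. \<forall>f\<in>Ms ! j. gap E e f)" and
    ad: "admissible_seq k (map (\<lambda>B. int (card B)) Ms)"
    unfolding admissible_matching_def by blast
  have len: "length Ms \<ge> 2"
  proof (rule ccontr)
    assume "\<not> length Ms \<ge> 2"
    hence "length Ms = 0 \<or> length Ms = 1" by linarith
    thus False
    proof
      assume "length Ms = 0"
      hence "M = {}" using un by simp
      thus False using assms(3) by simp
    next
      assume "length Ms = 1"
      then obtain B where "Ms = [B]" by (cases Ms) auto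
      hence "B = M" using un by simp
      thus False using ad \<open>Ms = [B]\<close> assms(3) by (simp add: admissible_seq_def)
    qed
  qed
  define M1 where "M1 = Ms ! 0"
  define A where "A = \<Union>M1"
  have l0: "0 < length Ms" and l1: "1 < length Ms" using len by linarith+
  have "Ms ! 0 \<in> set Ms" "Ms ! 1 \<in> set Ms" using l0 l1 nth_mem by blast+
  hence M1M: "M1 \<subseteq> M" and M2M: "Ms ! 1 \<subseteq> M" using un unfolding M1_def by blast+
  have split: "e \<subseteq> A \<or> e \<inter> A = {}" if "e \<in> E" for e
  proof -
    have cross: False if xA: "x \<in> A" and yA: "y \<notin> A" and xy: "{x, y} \<in> E" for x y
    proof -
      from xA obtain f where f: "f \<in> M1" "x \<in> f" unfolding A_def by blast
      obtain g where gM: "g \<in> M" and yg: "y \<in> g" using MU by blast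
      hence "g \<in> \<Union>(set Ms)" using un by blast
      then obtain j where j: "j < length Ms" "g \<in> Ms ! j" by (metis UnionE in_set_conv_nth)
      hence g: "g \<in> Ms ! j" "y \<in> g" using yg by auto
      have "j \<noteq> 0" proof assume "j = 0" thus False using j yg yA unfolding A_def M1_def by auto qed
      hence "gap E f g" using gp j f g l0 unfolding M1_def by auto
      thus False using f g xy unfolding gap_def by blast
    qed
    from sg that obtain x y where exy: "e = {x, y}" by (meson card_2_iff)
    have "{x, y} \<in> E" "{y, x} \<in> E" using that exy by (simp_all add: insert_commute)
    thus ?thesis using cross[of x y] cross[of y x] exy by blast
  qed
  have fin: "finite X" for X :: "'v set set" by simp
  have cardA: "card A = 2 * card M1" unfolding A_def
    by (rule card_Union_2) (use sg ME M1M Mdisj in \<open>blast, blast, simp\<close>)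
  have "card (\<Union>M) = 2 * card M"
    by (rule card_Union_2) (use sg ME Mdisj in \<open>blast, blast, simp\<close>)
  hence cardU: "card (UNIV :: 'v set) = 2 * (k + 1)" using MU assms(3) by simp
  have cardB: "card (- A) = 2 * (k + 1) - 2 * card M1"
    using cardU cardA by (simp add: Compl_eq_Diff_UNIV card_Diff_subset)
  obtain a where aA: "a \<in> A"
  proof -
    have "M1 \<noteq> {}" using ne l0 unfolding M1_def by auto
    then obtain f where f: "f \<in> M1" by blast
    hence "card f = 2" using sg ME M1M by blast
    then obtain x y where "f = {x, y}" by (meson card_2_iff)
    hence "x \<in> f" by simp
    thus ?thesis using that f unfolding A_def by blast
  qed
  obtain b where bA: "b \<notin> A"
  proof -
    have "Ms ! 1 \<noteq> {}" using ne l1 by auto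
    then obtain f where f: "f \<in> Ms ! 1" by blast
    hence "card f = 2" using sg ME M2M by blast
    then obtain x y where "f = {x, y}" by (meson card_2_iff)
    hence x: "x \<in> f" by simp
    have "x \<notin> A"
    proof
      assume "x \<in> A"
      then obtain f' where f': "f' \<in> M1" "x \<in> f'" unfolding A_def by blast
      have "gap E f' f" using gp l0 l1 f f' unfolding M1_def by auto
      thus False using x f' unfolding gap_def by blast
    qed
    thus ?thesis using that by blast
  qed
  have key: "W \<subseteq> A" if W: "W \<in> K" and WA: "W \<inter> A \<noteq> {}" for W
  proof (rule ccontr)
    assume "\<not> W \<subseteq> A"
    then obtain b' where b': "b' \<in> W" "b' \<notin> A" by blast
    from WA obtain a' where a': "a' \<in> W" "a' \<in> A" by blast
    from W obtain q where q: "q \<in> matching_power E k" "edges_mon M = q * (\<Prod>u\<in>W. var u :: ('v,'k) mpoly)"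
      unfolding K_def upper_koszul_def by blast
    from face_matching[OF q(2) q(1) assms(2)] obtain N where
      N: "matching E N" "card N = k" "\<Union>N \<inter> W = {}" by blast
    have NE: "N \<subseteq> E" and Ndisj: "\<forall>e\<in>N. \<forall>f\<in>N. e \<noteq> f \<longrightarrow> e \<inter> f = {}"
      using N(1) unfolding matching_def by auto
    define NA where "NA = {e\<in>N. e \<subseteq> A}"
    define NB where "NB = {e\<in>N. e \<inter> A = {}}"
    have ne2: "e \<noteq> {}" if "e \<in> N" for e using sg NE that by fastforce
    have NAB: "N = NA \<union> NB" "NA \<inter> NB = {}"
      using split NE ne2 unfolding NA_def NB_def by blast+
    have c1: "card (\<Union>NA) = 2 * card NA"
      by (rule card_Union_2) (use sg NE Ndisj in \<open>unfold NA_def, blast, blast, simp\<close>)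
    have c2: "card (\<Union>NB) = 2 * card NB"
      by (rule card_Union_2) (use sg NE Ndisj in \<open>unfold NB_def, blast, blast, simp\<close>)
    have s1: "\<Union>NA \<subseteq> A - {a'}" using N(3) a' unfolding NA_def by blast
    have s2: "\<Union>NB \<subseteq> - A - {b'}" using N(3) b' unfolding NB_def by blast
    have j1: "card (\<Union>NA) \<le> card (A - {a'})" using s1 by (simp add: card_mono)
    have j2: "card (A - {a'}) + 1 = card A" using card.remove[of A a'] a' by simp
    have i1: "2 * card NA + 1 \<le> 2 * card M1" using j1 j2 c1 cardA by linarith
    have j3: "card (\<Union>NB) \<le> card (- A - {b'})" using s2 by (simp add: card_mono)
    have j4: "card (- A - {b'}) + 1 = card (- A)" using card.remove[of "- A" b'] b' by simp
    have j5: "card (- A) + card A = card (UNIV :: 'v set)"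
      using card_Un_disjoint[of "-A" A] by (simp add: Compl_partition2)
    have i2: "2 * card NB + 1 + 2 * card M1 \<le> 2 * k + 2" using j3 j4 j5 c2 cardA cardU by simp
    have "card N = card NA + card NB" using NAB by (simp add: card_Un_disjoint)
    hence "card NA + card NB = k" using N(2) by simp
    moreover have "card NA < card M1" using i1 by linarith
    moreover have "card NB + card M1 < k + 1" using i2 by linarith
    ultimately show False by linarith
  qed
  have vA: "a \<in> cvertices K" "b \<in> cvertices K"
    using vertex_face[OF assms(2) assms(3), where 'k='k] unfolding cvertices_def K_def by simp_all
  have "\<forall>v\<in>cvertices K. \<forall>w\<in>cvertices K. \<exists>Fs. Fs \<noteq> [] \<and> set Fs \<subseteq> facets K \<and>
        v \<in> hd Fs \<and> w \<in> last Fs \<and>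
        (\<forall>i. Suc i < length Fs \<longrightarrow> Fs ! i \<inter> Fs ! Suc i \<noteq> {})"
    using conn by (simp only: connected_complex_def)
  from bspec[OF bspec[OF this vA(1)] vA(2)] obtain Fs where Fs: "Fs \<noteq> []" "set Fs \<subseteq> facets K" "a \<in> hd Fs" "b \<in> last Fs"
    "\<forall>i. Suc i < length Fs \<longrightarrow> Fs ! i \<inter> Fs ! Suc i \<noteq> {}"
    by (elim exE conjE) (intro that)
  have inK: "Fs ! i \<in> K" if "i < length Fs" for i
  proof -
    have "Fs ! i \<in> set Fs" using that by (rule nth_mem)
    hence "Fs ! i \<in> facets K" using Fs(2) by blast
    thus ?thesis unfolding facets_def by blast
  qed
  have all: "i < length Fs \<longrightarrow> Fs ! i \<subseteq> A" for i
  proof (induction i)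
    case 0
    show ?case
    proof
      assume l: "0 < length Fs"
      have "a \<in> Fs ! 0" using Fs(1,3) by (simp add: hd_conv_nth)
      hence "Fs ! 0 \<inter> A \<noteq> {}" using aA by blast
      thus "Fs ! 0 \<subseteq> A" by (rule key[OF inK[OF l]])
    qed
  next
    case (Suc i)
    show ?case
    proof
      assume l: "Suc i < length Fs"
      hence "Fs ! i \<inter> Fs ! Suc i \<noteq> {}" using Fs(5) by blast
      moreover have "Fs ! i \<subseteq> A" using Suc l by simp
      ultimately have "Fs ! Suc i \<inter> A \<noteq> {}" by blast
      thus "Fs ! Suc i \<subseteq> A" by (rule key[OF inK[OF l]])
    qed
  qed
  have "length Fs - 1 < length Fs" using Fs(1) by simp
  hence "Fs ! (length Fs - 1) \<subseteq> A" using all by blast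
  hence "last Fs \<subseteq> A" using Fs(1) by (simp add: last_conv_nth)
  thus False using Fs(4) bA by blast
qed

end
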